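(* Let $m\ge1$ and, for $\alpha=(\alpha_1,\ldots,\alpha_m)\in\mathbb{C}^m$, let $V(\alpha)$ be the Vandermonde matrix whose $(j,k)$ entry is $\alpha_j^{k-1}$ ($1\le j,k\le m$). For $\alpha$ with pairwise distinct coordinates, define the column vector of functions $$\big(f_1(x;\alpha),\ldots,f_m(x;\alpha)\big)^T:=V(\alpha)^{-1}\big(e^{\alpha_1x},\ldots,e^{\alpha_mx}\big)^T.$$ Then each $f_i$ extends to an entire function of $(x,\alpha)\in\mathbb{C}\times\mathbb{C}^m$, and for every fixed $\alpha\in\mathbb{C}^m$ the functions $f_1(\cdot;\alpha),\ldots,f_m(\cdot;\alpha)$ are linearly independent analytic solutions of $\big(\prod_{j=1}^m(\frac{d}{dx}-\alpha_j)\big)f=0$; i.e. they form a graceful basis of its solution space.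
   Context: A graceful basis for the equation $\big(\prod_{j=1}^m(\frac{d}{dx}-\alpha_j)\big)f=0$ is an $m$-tuple of analytic solutions $f_j(x;\alpha)$, $j=1,\dots,m$, such that each $f_j$ is an entire function of $(x,\alpha)\in\mathbb{C}\times\mathbb{C}^m$ and, for every fixed $\alpha\in\mathbb{C}^m$, the univariate functions $f_1(\cdot;\alpha),\dots,f_m(\cdot;\alpha)$ are linearly independent solutions of the equation. *)

theory Defs
  imports "HOL-Analysis.Analysis"
begin

text \<open>Indices 1..m are modelled by a finite linearly ordered type 'm (m = CARD('m)).
  The position (0-based) of an index k is the number of indices strictly below it;
  the (j,k) entry of the Vandermonde matrix is alpha_j to the power pos k.\<close>

definition pos :: "'m::{finite,linorder} \<Rightarrow> nat" where
  "pos k = card {i. i < k}"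

definition vandermonde :: "complex ^ 'm::{finite,linorder} \<Rightarrow> complex ^ 'm::{finite,linorder} ^ 'm::{finite,linorder}" where
  "vandermonde \<alpha> = (\<chi> j k. (\<alpha> $ j) ^ pos k)"

text \<open>Entire (holomorphic on all of C x C^m) function of several complex variables:
  Frechet differentiable everywhere with complex-linear derivative.\<close>

definition entire_cm :: "((complex \<times> (complex ^ 'm::finite)) \<Rightarrow> complex) \<Rightarrow> bool" where
  "entire_cm F \<longleftrightarrow> (\<forall>z. \<exists>D. (F has_derivative D) (at z) \<and>
       (\<forall>c u v. D (c * u, c *s v) = c * D (u, v)))"

definition dop :: "complex \<Rightarrow> (complex \<Rightarrow> complex) \<Rightarrow> (complex \<Rightarrow> complex)" where
  "dop a g = (\<lambda>x. deriv g x - a * g x)"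

definition ode_op :: "complex ^ 'm::{finite,linorder} \<Rightarrow> (complex \<Rightarrow> complex) \<Rightarrow> (complex \<Rightarrow> complex)" where
  "ode_op \<alpha> g = fold (\<lambda>j h. dop (\<alpha> $ j) h) (sorted_list_of_set (UNIV :: 'm set)) g"

end

theory Submission
  imports Defs "HOL-Computational_Algebra.Polynomial"
begin

definition E :: "(nat \<Rightarrow> complex) \<Rightarrow> complex \<Rightarrow> complex" where
  "E a x = (\<Sum>n. (a n / fact n) * x ^ n)"

definition growth :: "(nat \<Rightarrow> complex) \<Rightarrow> bool" where
  "growth a \<longleftrightarrow> (\<exists>C B. B \<ge> 0 \<and> (\<forall>n. norm (a n) \<le> C * B ^ n))"

lemma summable_exp_real: "summable (\<lambda>n. (y::real) ^ n / fact n)"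
  using summable_exp[of y] by (simp add: field_simps)

lemma growth_summable:
  assumes "growth a" shows "summable (\<lambda>n. (a n / fact n) * x ^ n)"
proof -
  obtain C B where B: "B \<ge> 0" and b: "\<And>n. norm (a n) \<le> C * B ^ n"
    using assms unfolding growth_def by blast
  have "summable (\<lambda>n. C * ((B * norm x) ^ n / fact n))"
    by (intro summable_mult summable_exp_real)
  moreover have "norm ((a n / fact n) * x ^ n) \<le> C * ((B * norm x) ^ n / fact n)" for n
  proof -
    have "norm ((a n / fact n) * x ^ n) = norm (a n) * norm x ^ n / fact n"
      by (simp add: norm_mult norm_divide norm_power)
    also have "\<dots> \<le> C * B ^ n * norm x ^ n / fact n"
      using b by (intro divide_right_mono mult_right_mono) auto
    finally show ?thesis by (simp add: power_mult_distrib)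
  qed
  ultimately show ?thesis by (rule summable_comparison_test'[where N=0])
qed

lemma growth_shift: assumes "growth a" shows "growth (\<lambda>n. a (Suc n))"
proof -
  obtain C B where "B \<ge> 0" "\<And>n. norm (a n) \<le> C*B^n" using assms unfolding growth_def by blast
  then have "\<forall>n. norm (a (Suc n)) \<le> (C*B)*B^n" by (metis mult.assoc power_Suc mult.commute)
  with \<open>B\<ge>0\<close> show ?thesis unfolding growth_def by blast
qed

lemma growth_lin:
  assumes "growth a" "growth b" shows "growth (\<lambda>n. a n - c * b n)"
proof -
  obtain C B where B: "B \<ge> 0" and b1: "\<And>n. norm (a n) \<le> C * B ^ n"
    using assms unfolding growth_def by blast
  obtain C' B' where B': "B' \<ge> 0" and b2: "\<And>n. norm (b n) \<le> C' * B' ^ n"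
    using assms unfolding growth_def by blast
  have C: "C \<ge> 0" using order_trans[OF norm_ge_zero b1[of 0]] by simp
  have C': "C' \<ge> 0" using order_trans[OF norm_ge_zero b2[of 0]] by simp
  let ?M = "max B B'"
  have "norm (a n - c * b n) \<le> (C + norm c * C') * ?M ^ n" for n
  proof -
    have "norm (a n - c * b n) \<le> norm (a n) + norm c * norm (b n)"
      by (metis norm_mult norm_triangle_ineq4)
    also have "\<dots> \<le> C * B ^ n + norm c * (C' * B' ^ n)"
      by (intro add_mono mult_left_mono b1 b2) auto
    also have "\<dots> \<le> C * ?M ^ n + norm c * (C' * ?M ^ n)"
      by (intro add_mono mult_left_mono power_mono) (use B B' C C' in auto)
    finally show ?thesis by (simp add: algebra_simps)
  qed
  then show ?thesis unfolding growth_def using B by (intro exI[of _ "C + norm c * C'"] exI[of _ ?M]) auto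
qed

lemma E_deriv:
  assumes "growth a" shows "(E a has_field_derivative E (\<lambda>n. a (Suc n)) x) (at x)"
proof -
  let ?K = "of_real (norm x + 1) :: complex"
  have "summable (\<lambda>n. (a n / fact n) * ?K ^ n)" by (rule growth_summable[OF assms])
  from termdiffs_strong[OF this, of x]
  have "((\<lambda>x. \<Sum>n. (a n / fact n) * x ^ n) has_field_derivative (\<Sum>n. diffs (\<lambda>n. a n / fact n) n * x ^ n)) (at x)"
    by simp
  moreover have "diffs (\<lambda>n. a n / fact n) = (\<lambda>n. a (Suc n) / fact n)"
    by (auto simp: diffs_def fun_eq_iff field_simps simp del: of_nat_Suc)
  ultimately show ?thesis unfolding E_def[abs_def] by simp
qed

lemma E_deriv_eq: "growth a \<Longrightarrow> deriv (E a) = E (\<lambda>n. a (Suc n))"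
  using E_deriv DERIV_imp_deriv by blast

lemma E_holo: "growth a \<Longrightarrow> E a holomorphic_on UNIV"
  using E_deriv holomorphic_on_def field_differentiable_def
  by (metis field_differentiable_at_within)

lemma E_zero_at: "E a 0 = a 0"
  unfolding E_def using powser_zero[of "\<lambda>n. a n / fact n"] by simp

lemma E_lin: assumes "growth a" "growth b" shows "E (\<lambda>n. a n - c * b n) x = E a x - c * E b x"
proof -
  have s1: "summable (\<lambda>n. (a n / fact n) * x ^ n)" by (rule growth_summable[OF assms(1)])
  have s2: "summable (\<lambda>n. c * ((b n / fact n) * x ^ n))" by (rule summable_mult[OF growth_summable[OF assms(2)]])
  have "E (\<lambda>n. a n - c * b n) x = (\<Sum>n. (a n / fact n) * x ^ n - c * ((b n / fact n) * x ^ n))"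
    unfolding E_def by (simp add: field_simps)
  also have "\<dots> = E a x - c * E b x"
    using suminf_diff[OF s1 s2] suminf_mult[OF growth_summable[OF assms(2)], of c] by (simp add: E_def)
  finally show ?thesis .
qed

definition seqop :: "complex \<Rightarrow> (nat \<Rightarrow> complex) \<Rightarrow> (nat \<Rightarrow> complex)" where
  "seqop b s = (\<lambda>n. s (Suc n) - b * s n)"

lemma growth_seqop: "growth s \<Longrightarrow> growth (seqop b s)"
  unfolding seqop_def by (intro growth_lin growth_shift)

lemma dop_E: "growth s \<Longrightarrow> dop b (E s) = E (seqop b s)"
  unfolding dop_def seqop_def
  by (simp add: E_deriv_eq E_lin growth_shift fun_eq_iff)

lemma fold_dop_E:
  "growth s \<Longrightarrow> fold (\<lambda>j h. dop (\<alpha> $ j) h) ys (E s) = E (fold (\<lambda>j s. seqop (\<alpha> $ j) s) ys s)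
     \<and> growth (fold (\<lambda>j s. seqop (\<alpha> $ j) s) ys s)"
  by (induction ys arbitrary: s) (auto simp: dop_E growth_seqop)

lemma E_zero_imp:
  assumes "growth a" "\<And>x. E a x = 0" shows "a n = 0"
proof -
  have "(deriv ^^ k) (E a) = E (\<lambda>n. a (n + k))" for k
  proof (induction k)
    case 0 then show ?case by simp
  next
    case (Suc k)
    have g: "growth (\<lambda>n. a (n + k))" using assms(1)
    proof (induction k)
      case 0 then show ?case by simp
    next
      case (Suc k) then show ?case using growth_shift[of "\<lambda>n. a (n+k)"] by simp
    qed
    show ?case using Suc by (simp add: E_deriv_eq[OF g])
  qed
  moreover have "(deriv ^^ k) (E a) = (\<lambda>x. 0)" for k
  proof -
    have "E a = (\<lambda>x. 0)" using assms(2) by auto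
    then show ?thesis by (induction k) auto
  qed
  ultimately have "E (\<lambda>m. a (m + n)) 0 = 0" by metis
  then show ?thesis by (simp add: E_zero_at)
qed


definition idx :: "nat \<Rightarrow> 'm::{finite,linorder}" where
  "idx n = sorted_list_of_set (UNIV::'m set) ! n"

lemma L_props:
  "length (sorted_list_of_set (UNIV::'m::{finite,linorder} set)) = CARD('m)"
  "distinct (sorted_list_of_set (UNIV::'m set))"
  "sorted_wrt (<) (sorted_list_of_set (UNIV::'m set))"
  "set (sorted_list_of_set (UNIV::'m set)) = UNIV"
  by (auto simp: strict_sorted_list_of_set)

lemma pos_idx: assumes "n < CARD('m::{finite,linorder})" shows "pos (idx n :: 'm) = n"
proof -
  let ?L = "sorted_list_of_set (UNIV::'m set)"
  have "{i. i < ?L ! n} = set (take n ?L)"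
  proof (intro set_eqI iffI)
    fix i assume "i \<in> {i. i < ?L ! n}"
    then have lt: "i < ?L!n" by simp
    obtain j where j: "j < length ?L" "?L ! j = i" using in_set_conv_nth L_props(4) by (metis UNIV_I)
    have "j < n"
    proof (rule ccontr)
      assume "\<not> j < n"
      then have "n \<le> j" by simp
      then have "?L ! n \<le> ?L ! j"
      proof (cases "j = n")
        case False
        with \<open>n \<le> j\<close> have "n < j" by simp
        then show ?thesis using sorted_wrt_nth_less[OF L_props(3)[where 'm='m], of n j] j L_props(1)[where 'm='m] by simp
      qed simp
      with lt j show False by simp
    qed
    then show "i \<in> set (take n ?L)" using j by (auto simp: in_set_conv_nth intro!: exI[of _ j])
  next
    fix i assume "i \<in> set (take n ?L)"
    then obtain j where "j < n" "j < length ?L" "?L ! j = i" by (auto simp: in_set_conv_nth)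
    then show "i \<in> {i. i < ?L ! n}" using sorted_wrt_nth_less[OF L_props(3)] assms L_props(1) by auto
  qed
  then have "pos (?L ! n) = card (set (take n ?L))" unfolding pos_def by simp
  also have "\<dots> = n" using distinct_card[OF distinct_take[OF L_props(2)[where 'm='m]]] assms L_props(1)[where 'm='m] by simp
  finally show ?thesis unfolding idx_def .
qed

lemma idx_surj: "\<exists>j<CARD('m::{finite,linorder}). (k::'m) = idx j"
proof -
  have "k \<in> set (sorted_list_of_set (UNIV::'m set))" using L_props(4) by simp
  then show ?thesis unfolding idx_def in_set_conv_nth using L_props(1) by metis
qed

lemma idx_pos: "idx (pos (k::'m::{finite,linorder})) = k"
  using idx_surj[of k] pos_idx by metis

lemma pos_lt: "pos (k::'m::{finite,linorder}) < CARD('m)"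
  using idx_surj[of k] pos_idx by metis

lemma card_pos: "CARD('m::{finite,linorder}) > 0" by simp

lemma sum_pos: "(\<Sum>k\<in>UNIV. f (pos (k::'m::{finite,linorder}))) = (\<Sum>n<CARD('m). f n)"
  by (rule sum.reindex_bij_witness[where i=idx and j=pos]) (auto simp: pos_idx idx_pos pos_lt)

lemma sorted_idx: "sorted_list_of_set (UNIV::'m::{finite,linorder} set) = map idx [0..<CARD('m)]"
  by (rule nth_equalityI) (auto simp: L_props(1) idx_def)

definition lin :: "complex \<Rightarrow> complex poly" where "lin b = [:- b, 1:]"

definition tt :: "complex poly" where "tt = [:0,1:]"
lemma poly_tt[simp]: "poly tt x = x" by (simp add: tt_def)

lemma lin_nz[simp]: "lin b \<noteq> 0" by (simp add: lin_def)
lemma degree_lin[simp]: "degree (lin b) = 1" by (simp add: lin_def)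
lemma poly_lin[simp]: "poly (lin b) x = x - b" by (simp add: lin_def)

fun Np :: "complex ^ 'm::{finite,linorder} \<Rightarrow> nat \<Rightarrow> complex poly" where
  "Np \<alpha> 0 = 1"
| "Np \<alpha> (Suc l) = Np \<alpha> l * lin (\<alpha> $ idx l)"

fun w :: "complex ^ 'm::{finite,linorder} \<Rightarrow> nat \<Rightarrow> nat \<Rightarrow> complex" where
  "w \<alpha> 0 l = (if l = 0 then 1 else 0)"
| "w \<alpha> (Suc n) l = \<alpha> $ idx l * w \<alpha> n l + (if l = 0 then 0 else w \<alpha> n (l - 1))"

definition Pn :: "complex ^ 'm::{finite,linorder} \<Rightarrow> nat \<Rightarrow> complex poly" where
  "Pn \<alpha> n = (\<Sum>l<CARD('m). smult (w \<alpha> n l) (Np \<alpha> l))"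

definition om :: "complex ^ 'm::{finite,linorder} \<Rightarrow> complex poly" where
  "om \<alpha> = Np \<alpha> CARD('m)"

lemma Np_nz: "Np \<alpha> l \<noteq> 0"
  by (induction l) auto

lemma degree_Np: "degree (Np \<alpha> l) = l"
  by (induction l) (auto simp: degree_mult_eq Np_nz)

lemma Np_shift: "tt * Np \<alpha> l = smult (\<alpha> $ idx l) (Np \<alpha> l) + Np \<alpha> (Suc l)"
  by (simp flip: poly_eq_poly_eq_iff add: fun_eq_iff algebra_simps)

lemma Pn_Suc: "Pn \<alpha> (Suc n) = tt * Pn \<alpha> n - smult (w \<alpha> n (CARD('m) - 1)) (om \<alpha>)"
  for \<alpha> :: "complex ^ 'm::{finite,linorder}"
proof -
  obtain k where k: "CARD('m) = Suc k" using card_pos[where 'm='m] gr0_conv_Suc by blast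
  have A: "Pn \<alpha> (Suc n) = (\<Sum>l<Suc k. smult (\<alpha> $ idx l * w \<alpha> n l) (Np \<alpha> l))
             + (\<Sum>l<Suc k. smult (if l = 0 then 0 else w \<alpha> n (l - 1)) (Np \<alpha> l))"
    unfolding Pn_def k by (simp add: smult_add_left sum.distrib)
  have B: "(\<Sum>l<Suc k. smult (if l = 0 then 0 else w \<alpha> n (l - 1)) (Np \<alpha> l))
       = (\<Sum>l<k. smult (w \<alpha> n l) (Np \<alpha> (Suc l)))"
    by (subst sum.lessThan_Suc_shift) simp
  have C: "tt * Pn \<alpha> n = (\<Sum>l<Suc k. smult (\<alpha> $ idx l * w \<alpha> n l) (Np \<alpha> l))
             + (\<Sum>l<Suc k. smult (w \<alpha> n l) (Np \<alpha> (Suc l)))"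
    unfolding Pn_def k
    by (simp only: sum_distrib_left mult_smult_right Np_shift smult_add_right sum.distrib smult_smult mult.commute)
  show ?thesis unfolding A B C om_def k by simp
qed

lemma poly_Np: "poly (Np \<alpha> l) x = (\<Prod>i<l. x - \<alpha> $ idx i)"
  by (induction l) auto

lemma poly_om: "poly (om \<alpha>) (\<alpha> $ j) = 0"
  for \<alpha> :: "complex ^ 'm::{finite,linorder}"
  unfolding om_def poly_Np
  by (rule prod_zero) (auto simp: idx_pos pos_lt intro!: bexI[of _ "pos j"])

lemma poly_Pn: "poly (Pn \<alpha> n) (\<alpha> $ j) = (\<alpha> $ j) ^ n"
proof (induction n)
  case 0
  show ?case unfolding Pn_def using card_pos
    by (subst sum.remove[where x=0]) auto
next
  case (Suc n)
  then show ?case by (simp add: Pn_Suc poly_om)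
qed

lemma degree_Pn: "degree (Pn \<alpha> n) < CARD('m)" for \<alpha> :: "complex ^ 'm::{finite,linorder}"
proof -
  have "degree (Pn \<alpha> n) \<le> CARD('m) - 1" unfolding Pn_def
    by (rule degree_sum_le) (auto intro: order_trans[OF degree_smult_le] simp: degree_Np)
  then show ?thesis using card_pos[where 'm='m] by linarith
qed

lemma degree_om: "degree (om \<alpha>) = CARD('m)" for \<alpha> :: "complex ^ 'm::{finite,linorder}"
  by (simp add: om_def degree_Np)

lemma Pn_mod: "Pn \<alpha> n = tt ^ n mod om \<alpha>" for \<alpha> :: "complex ^ 'm::{finite,linorder}"
proof (induction n)
  case 0
  have "Pn \<alpha> 0 = 1" unfolding Pn_def using card_pos
    by (subst sum.remove[where x=0]) auto
  then show ?case using degree_om[of \<alpha>] card_pos by (simp add: mod_poly_less)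
next
  case (Suc n)
  have "tt ^ Suc n mod om \<alpha> = (tt * (tt ^ n mod om \<alpha>)) mod om \<alpha>"
    by (simp only: power_Suc mod_mult_right_eq)
  also have "\<dots> = (Pn \<alpha> (Suc n) + smult (w \<alpha> n (CARD('m) - 1)) (om \<alpha>)) mod om \<alpha>"
    by (simp add: Pn_Suc Suc)
  also have "\<dots> = Pn \<alpha> (Suc n)"
    using degree_Pn[of \<alpha>] degree_om[of \<alpha>] by (simp add: mod_smult_left mod_poly_less poly_mod_add_left)
  finally show ?case by simp
qed


definition Fk :: "'m::{finite,linorder} \<Rightarrow> (complex \<times> (complex ^ 'm::{finite,linorder})) \<Rightarrow> complex" where
  "Fk k z = (\<Sum>l<CARD('m). coeff (Np (snd z) l) (pos k) * E (\<lambda>n. w (snd z) n l) (fst z))"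

lemma w_bound: "norm (w \<alpha> n l) \<le> (norm \<alpha> + 1) ^ n"
proof (induction n arbitrary: l)
  case 0 then show ?case by simp
next
  case (Suc n)
  have "norm (w \<alpha> (Suc n) l) \<le> norm (\<alpha> $ idx l) * norm (w \<alpha> n l) + norm (if l = 0 then 0 else w \<alpha> n (l - 1))"
    by (simp add: norm_triangle_le norm_mult del: w.simps(1))
  also have "\<dots> \<le> norm \<alpha> * (norm \<alpha> + 1) ^ n + (norm \<alpha> + 1) ^ n"
    by (intro add_mono mult_mono Finite_Cartesian_Product.norm_nth_le Suc) (auto intro: order_trans[OF _ Suc[of "l-1"]])
  also have "\<dots> = (norm \<alpha> + 1) ^ Suc n" by (simp add: algebra_simps)
  finally show ?case .
qed

lemma growth_w: "growth (\<lambda>n. w \<alpha> n l)"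
  unfolding growth_def by (intro exI[where x=1] exI[where x="norm \<alpha> + 1"]) (simp add: w_bound)

lemma growth_zero: "growth (\<lambda>n. 0)"
  unfolding growth_def by (rule exI[where x=0], rule exI[where x=0]) simp

lemma growth_sum: "finite L \<Longrightarrow> (\<And>l. l \<in> L \<Longrightarrow> growth (s l)) \<Longrightarrow> growth (\<lambda>n. \<Sum>l\<in>L. c l * s l n)"
proof (induction L rule: finite_induct)
  case empty then show ?case by (simp add: growth_zero)
next
  case (insert x F)
  have "growth (\<lambda>n. (\<Sum>l\<in>F. c l * s l n) - (- c x) * s x n)"
    using insert by (intro growth_lin) auto
  then show ?case using insert by (simp add: add.commute)
qed

lemma E_sum:
  assumes "finite L" "\<And>l. l \<in> L \<Longrightarrow> growth (s l)"
  shows "E (\<lambda>n. \<Sum>l\<in>L. c l * s l n) x = (\<Sum>l\<in>L. c l * E (s l) x)"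
proof -
  have "E (\<lambda>n. \<Sum>l\<in>L. c l * s l n) x = (\<Sum>n. \<Sum>l\<in>L. c l * ((s l n / fact n) * x ^ n))"
    unfolding E_def by (simp add: sum_divide_distrib sum_distrib_right mult.assoc)
  also have "\<dots> = (\<Sum>l\<in>L. \<Sum>n. c l * ((s l n / fact n) * x ^ n))"
    using assms by (intro suminf_sum summable_mult growth_summable) auto
  also have "\<dots> = (\<Sum>l\<in>L. c l * E (s l) x)" unfolding E_def
    using assms by (intro sum.cong refl suminf_mult growth_summable) auto
  finally show ?thesis .
qed

lemma coeff_Pn: "coeff (Pn \<alpha> n) i = (\<Sum>l<CARD('m). coeff (Np \<alpha> l) i * w \<alpha> n l)"
  for \<alpha> :: "complex ^ 'm::{finite,linorder}"
  unfolding Pn_def by (simp add: coeff_sum mult.commute)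

lemma growth_coeff_Pn: "growth (\<lambda>n. coeff (Pn \<alpha> n) i)"
  unfolding coeff_Pn by (intro growth_sum growth_w) auto

lemma Fk_E: "(\<lambda>x. Fk k (x, \<alpha>)) = E (\<lambda>n. coeff (Pn \<alpha> n) (pos k))"
  unfolding Fk_def coeff_Pn by (simp add: fun_eq_iff E_sum growth_w)

lemma Fk_E': "Fk k (x, \<alpha>) = E (\<lambda>n. coeff (Pn \<alpha> n) (pos k)) x"
  using fun_cong[OF Fk_E[of k \<alpha>], of x] by simp

lemma Fk_holo: "(\<lambda>x. Fk k (x, \<alpha>)) holomorphic_on UNIV"
  unfolding Fk_E by (rule E_holo[OF growth_coeff_Pn])

lemma seq_fold:
  assumes "l \<le> CARD('m::{finite,linorder})"
  shows "fold (\<lambda>j s. seqop (\<alpha> $ j) s) (map (idx :: nat \<Rightarrow> 'm) [0..<l]) (\<lambda>n. coeff (tt ^ n mod om \<alpha>) i)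
     = (\<lambda>n. coeff ((tt ^ n * Np \<alpha> l) mod om \<alpha>) i)"
  using assms
proof (induction l)
  case 0 then show ?case by simp
next
  case (Suc l)
  have e: "tt ^ n * Np \<alpha> (Suc l) = tt ^ Suc n * Np \<alpha> l - smult (\<alpha> $ idx l) (tt ^ n * Np \<alpha> l)" for n
  proof -
    have "poly (tt ^ n * Np \<alpha> (Suc l)) x = poly (tt ^ Suc n * Np \<alpha> l - smult (\<alpha> $ idx l) (tt ^ n * Np \<alpha> l)) x" for x
      by (simp add: algebra_simps)
    then show ?thesis using poly_eq_poly_eq_iff by blast
  qed
  have IH: "fold (\<lambda>j s. seqop (\<alpha> $ j) s) (map (idx :: nat \<Rightarrow> 'm) [0..<l]) (\<lambda>n. coeff (tt ^ n mod om \<alpha>) i)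
     = (\<lambda>n. coeff ((tt ^ n * Np \<alpha> l) mod om \<alpha>) i)" using Suc by simp
  show ?case
    unfolding upt_Suc_append[OF le0] map_append fold_append o_def IH
    by (simp only: fold_simps seqop_def e poly_mod_diff_left mod_smult_left coeff_diff coeff_smult list.map)
qed

lemma Fk_ode: "ode_op \<alpha> (\<lambda>x. Fk k (x, \<alpha>)) = (\<lambda>x. 0)"
  for \<alpha> :: "complex ^ 'm::{finite,linorder}"
proof -
  have "ode_op \<alpha> (\<lambda>x. Fk k (x, \<alpha>)) =
      E (fold (\<lambda>j s. seqop (\<alpha> $ j) s) (map (idx :: nat \<Rightarrow> 'm) [0..<CARD('m)]) (\<lambda>n. coeff (Pn \<alpha> n) (pos k)))"
    unfolding ode_op_def Fk_E sorted_idx using fold_dop_E[OF growth_coeff_Pn] by blast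
  also have "\<dots> = E (\<lambda>n. 0)"
    unfolding Pn_mod seq_fold[OF order_refl] by (simp add: om_def)
  also have "\<dots> = (\<lambda>x. 0)" by (simp add: E_def fun_eq_iff)
  finally show ?thesis .
qed

lemma tt_power: "tt ^ n = monom 1 n"
  by (simp add: tt_def monom_altdef)

lemma Fk_indep:
  fixes \<alpha> :: "complex ^ 'm::{finite,linorder}"
  assumes "\<forall>x. (\<Sum>k\<in>UNIV. c k * Fk k (x, \<alpha>)) = 0"
  shows "c k = 0"
proof -
  have e: "E (\<lambda>n. \<Sum>k\<in>UNIV. c k * coeff (Pn \<alpha> n) (pos k)) x = 0" for x
  proof -
    have "E (\<lambda>n. \<Sum>k\<in>UNIV. c k * coeff (Pn \<alpha> n) (pos k)) x = (\<Sum>k\<in>UNIV. c k * E (\<lambda>n. coeff (Pn \<alpha> n) (pos k)) x)"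
      by (rule E_sum) (auto simp: growth_coeff_Pn)
    also have "\<dots> = (\<Sum>k\<in>UNIV. c k * Fk k (x, \<alpha>))" by (simp only: Fk_E')
    also have "\<dots> = 0" using assms by blast
    finally show ?thesis .
  qed
  have g: "growth (\<lambda>n. \<Sum>k\<in>UNIV. c k * coeff (Pn \<alpha> n) (pos k))"
    by (rule growth_sum) (auto simp: growth_coeff_Pn)
  have z: "(\<Sum>k\<in>UNIV. c k * coeff (Pn \<alpha> n) (pos k)) = 0" for n
    by (rule E_zero_imp[OF g]) (rule e)
  have "Pn \<alpha> (pos k) = monom 1 (pos k)"
    unfolding Pn_mod tt_power using pos_lt[of k] degree_om[of \<alpha>]
    by (intro mod_poly_less) (simp add: degree_monom_eq)
  then have "(\<Sum>k'\<in>UNIV. c k' * coeff (Pn \<alpha> (pos k)) (pos k')) = (\<Sum>k'\<in>UNIV. if k' = k then c k' else 0)"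
  proof (intro sum.cong refl)
    fix k' assume "k' \<in> (UNIV :: 'm set)"
    have "pos k' = pos k \<longleftrightarrow> k' = k" "pos k = pos k' \<longleftrightarrow> k' = k" by (metis idx_pos)+
    then show "c k' * coeff (Pn \<alpha> (pos k)) (pos k') = (if k' = k then c k' else 0)"
      using \<open>Pn \<alpha> (pos k) = monom 1 (pos k)\<close> by (simp add: coeff_monom)
  qed
  then show ?thesis using z[of "pos k"] by simp
qed


lemma poly_sum_lt: "degree p < N \<Longrightarrow> poly p x = (\<Sum>i<N. coeff p i * x ^ i)" for p :: "complex poly"
  unfolding poly_altdef
  by (rule sum.mono_neutral_left) (auto simp: coeff_eq_0)

lemma E_pow: "E (\<lambda>n. b ^ n) x = exp (b * x)"
proof -
  have "(\<lambda>n. (b * x) ^ n /\<^sub>R fact n) sums exp (b * x)" by (rule exp_converges)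
  moreover have "(\<lambda>n. (b * x) ^ n /\<^sub>R fact n) = (\<lambda>n. (b ^ n / fact n) * x ^ n)"
    by (simp add: fun_eq_iff scaleR_conv_of_real power_mult_distrib field_simps)
  ultimately show ?thesis unfolding E_def by (simp add: sums_iff)
qed

lemma Fk_interp:
  fixes \<alpha> :: "complex ^ 'm::{finite,linorder}"
  shows "(\<Sum>k\<in>UNIV. (\<alpha> $ j) ^ pos k * Fk k (x, \<alpha>)) = exp (\<alpha> $ j * x)"
proof -
  have "(\<Sum>k\<in>UNIV. (\<alpha> $ j) ^ pos k * Fk k (x, \<alpha>)) = (\<Sum>k\<in>UNIV. (\<alpha> $ j) ^ pos (k::'m) * E (\<lambda>n. coeff (Pn \<alpha> n) (pos k)) x)"
    by (simp add: Fk_E')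
  also have "\<dots> = E (\<lambda>n. \<Sum>k\<in>UNIV. (\<alpha> $ j) ^ pos (k::'m) * coeff (Pn \<alpha> n) (pos k)) x"
    by (rule E_sum[symmetric]) (auto simp: growth_coeff_Pn)
  also have "(\<lambda>n. \<Sum>k\<in>UNIV. (\<alpha> $ j) ^ pos (k::'m) * coeff (Pn \<alpha> n) (pos k)) = (\<lambda>n. poly (Pn \<alpha> n) (\<alpha> $ j))"
  proof (rule ext)
    fix n
    have "(\<Sum>k\<in>UNIV. (\<alpha> $ j) ^ pos (k::'m) * coeff (Pn \<alpha> n) (pos k)) = (\<Sum>i<CARD('m). (\<alpha> $ j) ^ i * coeff (Pn \<alpha> n) i)"
      by (rule sum_pos[where 'm='m, of "\<lambda>i. (\<alpha> $ j) ^ i * coeff (Pn \<alpha> n) i"])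
    also have "\<dots> = poly (Pn \<alpha> n) (\<alpha> $ j)"
      unfolding poly_sum_lt[OF degree_Pn[of \<alpha> n]] by (simp add: mult_ac)
    finally show "(\<Sum>k\<in>UNIV. (\<alpha> $ j) ^ pos (k::'m) * coeff (Pn \<alpha> n) (pos k)) = poly (Pn \<alpha> n) (\<alpha> $ j)" .
  qed
  also have "\<dots> = (\<lambda>n. (\<alpha> $ j) ^ n)" by (simp add: poly_Pn)
  finally show ?thesis by (simp add: E_pow)
qed


definition cl :: "((complex \<times> (complex ^ 'm::finite)) \<Rightarrow> complex) \<Rightarrow> bool" where
  "cl D \<longleftrightarrow> (\<forall>c u v. D (c * u, c *s v) = c * D (u, v))"

lemma entire_cmI: "(\<And>z. \<exists>D. (F has_derivative D) (at z) \<and> cl D) \<Longrightarrow> entire_cm F"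
  unfolding entire_cm_def cl_def by blast

lemma entire_cmD: "entire_cm F \<Longrightarrow> \<exists>D. (F has_derivative D) (at z) \<and> cl D"
  unfolding entire_cm_def cl_def by blast

lemma ec_const: "entire_cm (\<lambda>z. c)"
  by (rule entire_cmI, rule exI[of _ "\<lambda>h. 0"]) (auto simp: cl_def)

lemma ec_fst: "entire_cm (\<lambda>z. fst z)"
  by (rule entire_cmI, rule exI[of _ "\<lambda>h. fst h"]) (auto simp: cl_def intro: has_derivative_fst[OF has_derivative_ident])

lemma ec_nth: "entire_cm (\<lambda>z. snd z $ j)"
proof (rule entire_cmI)
  fix z
  show "\<exists>D. ((\<lambda>z. snd z $ j) has_derivative D) (at z) \<and> cl D"
    by (rule exI[of _ "\<lambda>h. snd h $ j"])
      (auto simp: cl_def intro!: bounded_linear_imp_has_derivative bounded_linear_compose[OF bounded_linear_vec_nth bounded_linear_snd, unfolded o_def])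
qed

lemma ec_add: "entire_cm f \<Longrightarrow> entire_cm g \<Longrightarrow> entire_cm (\<lambda>z. f z + g z)"
proof (rule entire_cmI)
  fix z assume "entire_cm f" "entire_cm g"
  then obtain D1 D2 where "(f has_derivative D1) (at z)" "cl D1" "(g has_derivative D2) (at z)" "cl D2"
    using entire_cmD by metis
  then show "\<exists>D. ((\<lambda>z. f z + g z) has_derivative D) (at z) \<and> cl D"
    by (intro exI[of _ "\<lambda>h. D1 h + D2 h"]) (auto intro: has_derivative_add simp: cl_def algebra_simps)
qed

lemma ec_mult: "entire_cm f \<Longrightarrow> entire_cm g \<Longrightarrow> entire_cm (\<lambda>z. f z * g z)"
proof (rule entire_cmI)
  fix z assume "entire_cm f" "entire_cm g"
  then obtain D1 D2 where "(f has_derivative D1) (at z)" "cl D1" "(g has_derivative D2) (at z)" "cl D2"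
    using entire_cmD by metis
  then show "\<exists>D. ((\<lambda>z. f z * g z) has_derivative D) (at z) \<and> cl D"
    by (intro exI[of _ "\<lambda>h. f z * D2 h + D1 h * g z"] conjI has_derivative_mult) (auto simp: cl_def algebra_simps)
qed

lemma ec_diff: "entire_cm f \<Longrightarrow> entire_cm g \<Longrightarrow> entire_cm (\<lambda>z. f z - g z)"
proof -
  assume a: "entire_cm f" "entire_cm g"
  have "entire_cm (\<lambda>z. f z + (-1) * g z)" by (intro ec_add ec_mult ec_const a)
  then show ?thesis by simp
qed

lemma ec_sum: "finite L \<Longrightarrow> (\<And>l. l \<in> L \<Longrightarrow> entire_cm (f l)) \<Longrightarrow> entire_cm (\<lambda>z. \<Sum>l\<in>L. f l z)"
proof (induction L rule: finite_induct)
  case empty then show ?case by (simp add: ec_const)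
next
  case (insert x F)
  then have "entire_cm (\<lambda>z. f x z + (\<Sum>l\<in>F. f l z))" by (intro ec_add) auto
  then show ?case using insert by simp
qed

lemma coeff_Np_Suc: "coeff (Np \<alpha> (Suc l)) i = (if i = 0 then 0 else coeff (Np \<alpha> l) (i - 1)) - \<alpha> $ idx l * coeff (Np \<alpha> l) i"
  by (cases i) (simp_all add: lin_def)

lemma ec_coeff_Np: "entire_cm (\<lambda>z :: complex \<times> (complex ^ 'm::{finite,linorder}). coeff (Np (snd z) l) i)"
proof (induction l arbitrary: i)
  case 0 show ?case unfolding Np.simps(1) by (rule ec_const)
next
  case (Suc l)
  have A: "entire_cm (\<lambda>z :: complex \<times> (complex ^ 'm::{finite,linorder}). (if i = 0 then 0 else coeff (Np (snd z) l) (i - 1)))"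
  proof (cases "i = 0")
    case True then show ?thesis by (simp add: ec_const)
  next
    case False then show ?thesis using Suc[of "i - 1"] by simp
  qed
  have B: "entire_cm (\<lambda>z :: complex \<times> (complex ^ 'm::{finite,linorder}). snd z $ idx l * coeff (Np (snd z) l) i)"
    by (rule ec_mult[OF ec_nth Suc])
  have eq: "(\<lambda>z :: complex \<times> (complex ^ 'm::{finite,linorder}). coeff (Np (snd z) (Suc l)) i) =
     (\<lambda>z. (if i = 0 then 0 else coeff (Np (snd z) l) (i - 1)) - snd z $ idx l * coeff (Np (snd z) l) i)"
    by (rule ext) (rule coeff_Np_Suc)
  show ?case unfolding eq by (rule ec_diff[OF A B])
qed


lemma mtest_deriv:
  fixes f :: "nat \<Rightarrow> 'a::real_normed_vector \<Rightarrow> 'b::banach"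
  assumes S: "open S" "convex S" "x0 \<in> S"
    and d: "\<And>n x. x \<in> S \<Longrightarrow> (f n has_derivative f' n x) (at x)"
    and b: "\<And>n x h. x \<in> S \<Longrightarrow> norm (f' n x h) \<le> M n * norm h"
    and M: "summable M"
    and s: "\<And>x. x \<in> S \<Longrightarrow> summable (\<lambda>n. f n x)"
  shows "((\<lambda>x. \<Sum>n. f n x) has_derivative (\<lambda>h. \<Sum>n. f' n x0 h)) (at x0)"
proof -
  have sn: "summable (\<lambda>n. norm (f' n x h))" if "x \<in> S" for x h
    by (rule summable_comparison_test'[where N=0, OF summable_mult2[OF M, of "norm h"]]) (use b[OF that] in simp)
  have sf': "summable (\<lambda>n. f' n x h)" if "x \<in> S" for x h
    by (rule summable_norm_cancel[OF sn[OF that]])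
  have "\<exists>g. \<forall>x\<in>S. (\<lambda>n. f n x) sums (g x) \<and> (g has_derivative (\<lambda>h. \<Sum>n. f' n x h)) (at x within S)"
  proof (rule has_derivative_series[OF S(2) _ _ S(3)])
    show "(f n has_derivative f' n x) (at x within S)" if "x \<in> S" for n x
      using d[OF that] by (rule has_derivative_subset) simp
    show "(\<lambda>n. f n x0) sums (\<Sum>n. f n x0)" using s[OF S(3)] by (simp add: summable_sums)
    fix e :: real assume "e > 0"
    obtain N where N: "\<forall>n\<ge>N. norm (\<Sum>i. M (i + n)) < e" using suminf_exist_split[OF \<open>e>0\<close> M] by blast
    show "\<forall>\<^sub>F n in sequentially. \<forall>x\<in>S. \<forall>h. norm ((\<Sum>i<n. f' i x h) - (\<Sum>n. f' n x h)) \<le> e * norm h"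
      unfolding eventually_sequentially
    proof (intro exI[of _ N] allI impI ballI)
      fix n x h assume n: "N \<le> n" and x: "x \<in> S"
      have sM: "summable (\<lambda>i. M (i + n))" using M by (rule summable_ignore_initial_segment)
      have "norm ((\<Sum>i<n. f' i x h) - (\<Sum>n. f' n x h)) = norm (\<Sum>i. f' (i + n) x h)"
        using suminf_minus_initial_segment[OF sf'[OF x], of n] by (simp add: norm_minus_commute)
      also have "\<dots> \<le> (\<Sum>i. norm (f' (i + n) x h))"
        by (rule summable_norm) (rule summable_ignore_initial_segment[OF sn[OF x]])
      also have "\<dots> \<le> (\<Sum>i. M (i + n) * norm h)"
      proof (rule suminf_le)
        show "norm (f' (i + n) x h) \<le> M (i + n) * norm h" for i by (rule b[OF x])
        show "summable (\<lambda>i. norm (f' (i + n) x h))" by (rule summable_ignore_initial_segment[OF sn[OF x]])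
        show "summable (\<lambda>i. M (i + n) * norm h)" by (rule summable_mult2[OF sM])
      qed
      also have "\<dots> = (\<Sum>i. M (i + n)) * norm h" by (rule suminf_mult2[symmetric, OF sM])
      also have "\<dots> \<le> e * norm h"
      proof (rule mult_right_mono)
        have "(\<Sum>i. M (i + n)) \<le> norm (\<Sum>i. M (i + n))" by simp
        also have "\<dots> < e" using N n by blast
        finally show "(\<Sum>i. M (i + n)) \<le> e" by simp
      qed simp
      finally show "norm ((\<Sum>i<n. f' i x h) - (\<Sum>n. f' n x h)) \<le> e * norm h" .
    qed
  qed
  then obtain g where g: "\<forall>x\<in>S. (\<lambda>n. f n x) sums (g x) \<and> (g has_derivative (\<lambda>h. \<Sum>n. f' n x h)) (at x within S)"
    by (rule exE)
  have "(g has_derivative (\<lambda>h. \<Sum>n. f' n x0 h)) (at x0)"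
    using conjunct2[OF g[rule_format, OF S(3)]] unfolding at_within_open[OF S(3,1)] .
  moreover have "g x = (\<Sum>n. f n x)" if "x \<in> S" for x
    by (rule sums_unique[OF conjunct1[OF g[rule_format, OF that]]])
  ultimately show ?thesis
    by (rule has_derivative_transform_within_open[OF _ S(1) S(3)])
qed


fun dw :: "complex ^ 'm::{finite,linorder} \<Rightarrow> complex ^ 'm::{finite,linorder} \<Rightarrow> nat \<Rightarrow> nat \<Rightarrow> complex" where
  "dw \<alpha> h 0 l = 0"
| "dw \<alpha> h (Suc n) l = h $ idx l * w \<alpha> n l + \<alpha> $ idx l * dw \<alpha> h n l + (if l = 0 then 0 else dw \<alpha> h n (l - 1))"

lemma vec_nth_deriv: "((\<lambda>\<alpha>::complex^'m::finite. \<alpha> $ i) has_derivative (\<lambda>h. h $ i)) (at \<alpha>)"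
  by (rule bounded_linear_imp_has_derivative[OF bounded_linear_vec_nth])

lemma w_deriv: "((\<lambda>\<alpha>. w \<alpha> n l) has_derivative (\<lambda>h. dw \<alpha> h n l)) (at \<alpha>)"
proof (induction n arbitrary: l)
  case 0 show ?case by simp
next
  case (Suc n)
  have m: "((\<lambda>\<alpha>. \<alpha> $ idx l * w \<alpha> n l) has_derivative (\<lambda>h. \<alpha> $ idx l * dw \<alpha> h n l + h $ idx l * w \<alpha> n l)) (at \<alpha>)"
    by (rule has_derivative_mult[OF vec_nth_deriv Suc])
  have r: "((\<lambda>\<alpha>. if l = 0 then 0 else w \<alpha> n (l - 1)) has_derivative (\<lambda>h. if l = 0 then 0 else dw \<alpha> h n (l - 1))) (at \<alpha>)"
    by (cases "l = 0") (simp_all add: Suc)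
  have e1: "(\<lambda>\<alpha>. w \<alpha> (Suc n) l) = (\<lambda>\<alpha>. \<alpha> $ idx l * w \<alpha> n l + (if l = 0 then 0 else w \<alpha> n (l - 1)))"
    by (simp only: w.simps)
  have e2: "(\<lambda>h. dw \<alpha> h (Suc n) l) = (\<lambda>h. (\<alpha> $ idx l * dw \<alpha> h n l + h $ idx l * w \<alpha> n l) + (if l = 0 then 0 else dw \<alpha> h n (l - 1)))"
    by (simp only: dw.simps) (simp add: fun_eq_iff algebra_simps)
  show ?case unfolding e1 e2 by (rule has_derivative_add[OF m r])
qed

lemma dw_lin: "dw \<alpha> (c *s h) n l = c * dw \<alpha> h n l"
  by (induction n arbitrary: l) (auto simp: algebra_simps)

lemma dw_bound: "norm (dw \<alpha> h n l) \<le> of_nat n * (norm \<alpha> + 1) ^ n * norm h"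
proof (induction n arbitrary: l)
  case 0 then show ?case by simp
next
  case (Suc n)
  let ?K = "norm \<alpha> + 1"
  let ?a = "h $ idx l * w \<alpha> n l" and ?b = "\<alpha> $ idx l * dw \<alpha> h n l"
    and ?c = "if l = 0 then 0 else dw \<alpha> h n (l - 1)"
  have "norm (dw \<alpha> h (Suc n) l) = norm (?a + ?b + ?c)" by simp
  also have "\<dots> \<le> norm ?a + norm ?b + norm ?c"
    by (rule order_trans[OF norm_triangle_ineq add_right_mono[OF norm_triangle_ineq]])
  also have "\<dots> \<le> norm h * ?K ^ n + norm \<alpha> * (of_nat n * ?K ^ n * norm h) + of_nat n * ?K ^ n * norm h"
  proof (intro add_mono)
    show "norm ?a \<le> norm h * ?K ^ n" unfolding norm_mult
      by (intro mult_mono Finite_Cartesian_Product.norm_nth_le w_bound) auto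
    show "norm ?b \<le> norm \<alpha> * (of_nat n * ?K ^ n * norm h)" unfolding norm_mult
      by (intro mult_mono Finite_Cartesian_Product.norm_nth_le Suc) auto
    show "norm ?c \<le> of_nat n * ?K ^ n * norm h"
      using Suc[of "l - 1"] by auto
  qed
  also have "\<dots> \<le> of_nat (Suc n) * ?K ^ Suc n * norm h"
  proof -
    have eq: "of_nat (Suc n) * ?K ^ Suc n * norm h = norm h * ?K ^ n + norm \<alpha> * (of_nat n * ?K ^ n * norm h) + of_nat n * ?K ^ n * norm h + norm \<alpha> * ?K ^ n * norm h"
      by (simp add: algebra_simps)
    have "0 \<le> norm \<alpha> * ?K ^ n * norm h" by simp
    then show ?thesis unfolding eq by linarith
  qed
  finally show ?case .
qed

lemma nfst: "norm (fst p) \<le> norm p" by (metis norm_fst_le prod.collapse)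
lemma nsnd: "norm (snd p) \<le> norm p" by (metis norm_snd_le prod.collapse)

lemma power_le_2pow: "real n \<le> 2 ^ n"
proof -
  have "n < 2 ^ n" by (rule less_exp)
  then have "real n \<le> real (2 ^ n)" by simp
  then show ?thesis by simp
qed

lemma ec_G: "entire_cm (\<lambda>z :: complex \<times> (complex ^ 'm::{finite,linorder}). E (\<lambda>n. w (snd z) n l) (fst z))"
proof (rule entire_cmI)
  fix z0 :: "complex \<times> (complex ^ 'm::{finite,linorder})"
  define X where "X = norm (fst z0) + 2"
  define K where "K = norm (snd z0) + 2"
  define f where "f = (\<lambda>n (z :: complex \<times> (complex ^ 'm::{finite,linorder})). (w (snd z) n l * inverse (fact n)) * fst z ^ n)"
  define f' where "f' = (\<lambda>n (z :: complex \<times> (complex ^ 'm::{finite,linorder})) (h :: complex \<times> (complex ^ 'm::{finite,linorder})).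
      (w (snd z) n l * inverse (fact n)) * (of_nat n * fst h * fst z ^ (n - 1)) + (dw (snd z) (snd h) n l * inverse (fact n)) * fst z ^ n)"
  define M where "M = (\<lambda>n. 2 * ((2 * K * X) ^ n / fact n))"
  have X1: "X \<ge> 1" and K1: "K \<ge> 1" unfolding X_def K_def by auto
  have K0: "K \<ge> 0" and X0: "X \<ge> 0" using X1 K1 by auto
  have E_eq: "E (\<lambda>n. w (snd z) n l) (fst z) = (\<Sum>n. f n z)" for z
    unfolding E_def f_def by (simp add: divide_inverse)
  have deriv: "(f n has_derivative f' n z) (at z)" for n z
  proof -
    have a: "((\<lambda>z. w (snd z) n l * inverse (fact n)) has_derivative (\<lambda>h. dw (snd z) (snd h) n l * inverse (fact n))) (at z)"
      by (rule has_derivative_mult_left[OF has_derivative_compose[OF has_derivative_snd[OF has_derivative_ident] w_deriv]])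
    have b: "((\<lambda>z. fst z ^ n) has_derivative (\<lambda>h. of_nat n * fst h * fst z ^ (n - 1))) (at z)"
      using has_derivative_power[OF has_derivative_fst[OF has_derivative_ident]] .
    show ?thesis unfolding f_def f'_def using has_derivative_mult[OF a b] .
  qed
  have cl': "cl (\<lambda>h. f' n z h)" for n z
    unfolding cl_def f'_def by (simp add: dw_lin algebra_simps)
  have bound: "norm (f' n z h) \<le> M n * norm h" if z: "z \<in> ball z0 1" for n z h
  proof -
    have d: "norm (z - z0) < 1" using z by (simp add: dist_norm norm_minus_commute)
    have "norm (fst z) \<le> norm (fst z0) + norm (fst (z - z0))"
      by (metis add_diff_cancel_left' fst_diff norm_triangle_ineq add.commute diff_add_cancel)
    also have "\<dots> \<le> norm (fst z0) + norm (z - z0)" using nfst[of "z - z0"] by simp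
    finally have nx: "norm (fst z) \<le> X" using d unfolding X_def by linarith
    have "norm (snd z) \<le> norm (snd z0) + norm (snd (z - z0))"
      by (metis add_diff_cancel_left' snd_diff norm_triangle_ineq add.commute diff_add_cancel)
    also have "\<dots> \<le> norm (snd z0) + norm (z - z0)" using nsnd[of "z - z0"] by simp
    finally have na: "norm (snd z) + 1 \<le> K" using d unfolding K_def by linarith
    have hx: "norm (fst h) \<le> norm h" by (rule nfst)
    have ha: "norm (snd h) \<le> norm h" by (rule nsnd)
    have wK: "norm (w (snd z) n l) \<le> K ^ n"
      by (rule order_trans[OF w_bound power_mono[OF na]]) simp
    have dK: "norm (dw (snd z) (snd h) n l) \<le> of_nat n * K ^ n * norm h"
      by (rule order_trans[OF dw_bound]) (intro mult_mono power_mono na ha, auto simp: K0)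
    have p1: "norm (fst z) ^ n \<le> X ^ n" by (rule power_mono[OF nx]) simp
    have p2: "norm (fst z) ^ (n - 1) \<le> X ^ n"
      by (rule order_trans[OF power_mono[OF nx] power_increasing]) (use X1 in auto)
    have "norm (f' n z h) \<le> (K ^ n / fact n) * (of_nat n * norm h * X ^ n) + (of_nat n * K ^ n * norm h / fact n) * X ^ n"
      unfolding f'_def
    proof (rule order_trans[OF norm_triangle_ineq add_mono])
      show "norm (w (snd z) n l * inverse (fact n) * (of_nat n * fst h * fst z ^ (n - 1)))
          \<le> (K ^ n / fact n) * (of_nat n * norm h * X ^ n)"
        unfolding norm_mult norm_inverse norm_power norm_of_nat norm_fact divide_inverse
        by (intro mult_mono wK hx p2 order_refl) (auto simp: K0 X0)
      show "norm (dw (snd z) (snd h) n l * inverse (fact n) * fst z ^ n) \<le> (of_nat n * K ^ n * norm h / fact n) * X ^ n"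
        unfolding norm_mult norm_inverse norm_power norm_fact divide_inverse
        by (intro mult_mono dK p1 order_refl) (auto simp: K0 X0)
    qed
    also have "\<dots> = 2 * real n * (K * X) ^ n / fact n * norm h"
      by (simp add: power_mult_distrib field_simps)
    also have "\<dots> \<le> 2 * 2 ^ n * (K * X) ^ n / fact n * norm h"
      using power_le_2pow[of n] K1 X1
      by (intro mult_right_mono divide_right_mono mult_left_mono mult_right_mono) auto
    also have "\<dots> = M n * norm h" unfolding M_def by (simp add: power_mult_distrib)
    finally show ?thesis .
  qed
  have sM: "summable M" unfolding M_def by (intro summable_mult summable_exp_real)
  have sf: "summable (\<lambda>n. f n z)" for z
    using growth_summable[OF growth_w, of "snd z" l "fst z"] unfolding f_def by (simp add: divide_inverse)
  have D1: "((\<lambda>z. \<Sum>n. f n z) has_derivative (\<lambda>h. \<Sum>n. f' n z0 h)) (at z0)"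
    by (rule mtest_deriv[where M=M and S="ball z0 1", OF open_ball convex_ball centre_in_ball[THEN iffD2] deriv bound sM sf]) auto
  have C1: "cl (\<lambda>h. \<Sum>n. f' n z0 h)"
    unfolding cl_def
  proof (intro allI)
    fix c u v
    have s: "summable (\<lambda>n. f' n z0 h)" for h
      by (rule summable_comparison_test'[where N=0, OF summable_mult2[OF sM, of "norm h"]]) (use bound in auto)
    have "(\<Sum>n. f' n z0 (c * u, c *s v)) = (\<Sum>n. c * f' n z0 (u, v))"
      using cl' unfolding cl_def by simp
    also have "\<dots> = c * (\<Sum>n. f' n z0 (u, v))" by (rule suminf_mult[OF s])
    finally show "(\<Sum>n. f' n z0 (c * u, c *s v)) = c * (\<Sum>n. f' n z0 (u, v))" .
  qed
  have E_eq': "(\<lambda>z. E (\<lambda>n. w (snd z) n l) (fst z)) = (\<lambda>z. \<Sum>n. f n z)"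
    using E_eq by (rule ext)
  show "\<exists>D. ((\<lambda>z. E (\<lambda>n. w (snd z) n l) (fst z)) has_derivative D) (at z0) \<and> cl D"
    unfolding E_eq' using D1 C1 by (intro exI conjI)
qed

lemma ec_Fk: "entire_cm (Fk (k :: 'm::{finite,linorder}))"
proof -
  have "entire_cm (\<lambda>z. \<Sum>l<CARD('m). coeff (Np (snd z) l) (pos k) * E (\<lambda>n. w (snd z) n l) (fst z))"
    by (intro ec_sum ec_mult ec_coeff_Np ec_G) auto
  then show ?thesis unfolding Fk_def[abs_def] .
qed


lemma vander_mult: "vandermonde \<alpha> *v (\<chi> k. Fk k (x, \<alpha>)) = (\<chi> j. exp (\<alpha> $ j * x))"
  by (simp add: vec_eq_iff matrix_vector_mult_def vandermonde_def Fk_interp)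

lemma vander_inj:
  fixes \<alpha> c :: "complex ^ 'm::{finite,linorder}"
  assumes dist: "\<forall>i j. i \<noteq> j \<longrightarrow> \<alpha> $ i \<noteq> \<alpha> $ j" and z: "vandermonde \<alpha> *v c = 0"
  shows "c = 0"
proof -
  define q where "q = (\<Sum>k\<in>UNIV. monom (c $ k) (pos k))"
  have pq: "poly q y = (\<Sum>k\<in>UNIV. c $ k * y ^ pos k)" for y
    unfolding q_def by (simp add: poly_sum poly_monom)
  have roots: "poly q (\<alpha> $ j) = 0" for j
  proof -
    have "(vandermonde \<alpha> *v c) $ j = 0" using z by simp
    then show ?thesis unfolding pq by (simp add: matrix_vector_mult_def vandermonde_def mult.commute)
  qed
  have deg: "degree q < CARD('m)"
  proof -
    have pk: "pos (k::'m) \<le> CARD('m) - 1" for k using pos_lt[of k] by linarith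
    have "degree q \<le> CARD('m) - 1" unfolding q_def
    proof (rule degree_sum_le)
      show "finite (UNIV :: 'm set)" by simp
      fix p :: 'm
      show "degree (monom (c $ p) (pos p)) \<le> CARD('m) - 1" by (rule order_trans[OF degree_monom_le pk])
    qed
    then show ?thesis using card_pos[where 'm='m] by linarith
  qed
  have "q = 0"
  proof (rule ccontr)
    assume q0: "q \<noteq> 0"
    have "card {y. poly q y = 0} \<le> degree q" by (rule card_poly_roots_bound[OF q0])
    moreover have "range (\<lambda>j. \<alpha> $ j) \<subseteq> {y. poly q y = 0}" using roots by auto
    moreover have "finite {y. poly q y = 0}" by (rule poly_roots_finite[OF q0])
    moreover have "card (range (\<lambda>j. \<alpha> $ j)) = CARD('m)"
      by (rule card_image) (use dist in \<open>auto simp: inj_on_def\<close>)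
    ultimately have "CARD('m) \<le> degree q" by (metis card_mono order_trans)
    with deg show False by simp
  qed
  have "c $ k = 0" for k
  proof -
    have "coeff q (pos k) = (\<Sum>k'\<in>UNIV. if k' = k then c $ k' else 0)"
      unfolding q_def coeff_sum
    proof (intro sum.cong refl)
      fix k' :: 'm
      have "pos k' = pos k \<longleftrightarrow> k' = k" "pos k = pos k' \<longleftrightarrow> k' = k" by (metis idx_pos)+
      then show "coeff (monom (c $ k') (pos k')) (pos k) = (if k' = k then c $ k' else 0)"
        by (simp add: coeff_monom)
    qed
    then show ?thesis using \<open>q = 0\<close> by simp
  qed
  then show ?thesis by (simp add: vec_eq_iff)
qed

lemma matrix_inv_left': "invertible A \<Longrightarrow> matrix_inv A ** A = mat 1"
  unfolding matrix_inv_def invertible_def by (rule someI2_ex) auto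

lemma Fk_vander:
  fixes \<alpha> :: "complex ^ 'm::{finite,linorder}"
  assumes dist: "\<forall>i j. i \<noteq> j \<longrightarrow> \<alpha> $ i \<noteq> \<alpha> $ j"
  shows "Fk k (x, \<alpha>) = (matrix_inv (vandermonde \<alpha>) *v (\<chi> j. exp (\<alpha> $ j * x))) $ k"
proof -
  have "invertible (vandermonde \<alpha>)"
    unfolding invertible_left_inverse matrix_left_invertible_ker using vander_inj[OF dist] by blast
  then have "matrix_inv (vandermonde \<alpha>) *v (\<chi> j. exp (\<alpha> $ j * x)) = (\<chi> k. Fk k (x, \<alpha>))"
    by (simp flip: vander_mult add: matrix_vector_mul_assoc matrix_inv_left')
  then show ?thesis by simp
qed

theorem corollary1:
  shows "\<exists>F :: 'm::{finite,linorder} \<Rightarrow> (complex \<times> (complex ^ 'm::{finite,linorder})) \<Rightarrow> complex.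
    (\<forall>k. entire_cm (F k)) \<and>
    (\<forall>\<alpha> x. (\<forall>i j. i \<noteq> j \<longrightarrow> \<alpha> $ i \<noteq> \<alpha> $ j) \<longrightarrow>
        (\<forall>k. F k (x, \<alpha>) = (matrix_inv (vandermonde \<alpha>) *v (\<chi> j. exp (\<alpha> $ j * x))) $ k)) \<and>
    (\<forall>\<alpha>. (\<forall>k. (\<lambda>x. F k (x, \<alpha>)) holomorphic_on UNIV) \<and>
         (\<forall>k. ode_op \<alpha> (\<lambda>x. F k (x, \<alpha>)) = (\<lambda>x. 0)) \<and>
         (\<forall>c :: 'm::{finite,linorder} \<Rightarrow> complex. (\<forall>x. (\<Sum>k\<in>UNIV. c k * F k (x, \<alpha>)) = 0) \<longrightarrow> (\<forall>k. c k = 0)))"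
proof (rule exI[of _ Fk], intro conjI allI impI)
  show "entire_cm (Fk k)" for k by (rule ec_Fk)
  show "Fk k (x, \<alpha>) = (matrix_inv (vandermonde \<alpha>) *v (\<chi> j. exp (\<alpha> $ j * x))) $ k"
    if "\<forall>i j. i \<noteq> j \<longrightarrow> \<alpha> $ i \<noteq> \<alpha> $ j" for \<alpha> :: "complex ^ 'm::{finite,linorder}" and x k
    by (rule Fk_vander[OF that])
  show "(\<lambda>x. Fk k (x, \<alpha>)) holomorphic_on UNIV" for k :: "'m::{finite,linorder}" and \<alpha> :: "complex ^ 'm::{finite,linorder}" by (rule Fk_holo)
  show "ode_op \<alpha> (\<lambda>x. Fk k (x, \<alpha>)) = (\<lambda>x. 0)" for k :: "'m::{finite,linorder}" and \<alpha> :: "complex ^ 'm::{finite,linorder}" by (rule Fk_ode)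
  show "c k = 0" if "\<forall>x. (\<Sum>k\<in>UNIV. c k * Fk k (x, \<alpha>)) = 0" for c k and \<alpha> :: "complex ^ 'm::{finite,linorder}"
    by (rule Fk_indep[OF that])
qed


end
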